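(* Let $G$ be a connected graph having a matching bond with $m$ edges. Consider the generalized Broadcast setting in which initially there are $k_1\ge1$ ignorant agents and $k_2\ge1$ source agents (all holding $\mathcal M$), all on pairwise distinct nodes. If $k_1+k_2\le m-1$, then the adversary has a winning strategy, i.e. it can prevent forever any ignorant agent from obtaining $\mathcal M$.
   Context: A bond of a graph is a minimal edge cut: a set of edges whose removal disconnects the graph, but such that removing all but any one of its edges leaves the graph connected. A matching bond is a bond whose edges are pairwise vertex-disjoint. Broadcast model (with several initial sources): a connected base graph $G=(V,E)$. Some agents (source agents) hold a message $\mathcal M$, the others (ignorant agents) do not; initially all agents occupy pairwise distinct nodes, the initial placement being chosen by the adversary. Time proceeds in synchronous rounds; in each round: (1) the adversary removes a (possibly empty) set $E'\subseteq E$ of edges such that $(V,E\setminus E')$ is connected; (2) each agent (agents have unique IDs, local memory, and see the entire current graph, the positions of all agents and which agents hold $\mathcal M$) chooses either to stay or to traverse an edge of $E\setminus E'$ incident to its current node; (3) agents move. Whenever an ignorant agent is at the same node as an agent holding $\mathcal M$, it receives $\mathcal M$ and becomes a source agent. The adversary is adaptive and knows the agents' strategy. *)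

theory Defs
  imports Main
begin

definition graph :: "'v set \<Rightarrow> 'v set set \<Rightarrow> bool" where
  "graph V E \<longleftrightarrow> finite V \<and> (\<forall>e\<in>E. e \<subseteq> V \<and> card e = 2)"

definition edge_rel :: "'v set set \<Rightarrow> ('v \<times> 'v) set" where
  "edge_rel F = {(u, v). {u, v} \<in> F}"

definition conn :: "'v set \<Rightarrow> 'v set set \<Rightarrow> bool" where
  "conn V F \<longleftrightarrow> (\<forall>u\<in>V. \<forall>v\<in>V. (u, v) \<in> (edge_rel F)\<^sup>*)"

definition bond :: "'v set \<Rightarrow> 'v set set \<Rightarrow> 'v set set \<Rightarrow> bool" where
  "bond V E B \<longleftrightarrow> B \<subseteq> E \<and> \<not> conn V (E - B) \<and> (\<forall>e\<in>B. conn V (E - (B - {e})))"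

definition matching_bond :: "'v set \<Rightarrow> 'v set set \<Rightarrow> 'v set set \<Rightarrow> bool" where
  "matching_bond V E B \<longleftrightarrow> bond V E B \<and> (\<forall>e1\<in>B. \<forall>e2\<in>B. e1 \<noteq> e2 \<longrightarrow> e1 \<inter> e2 = {})"

(* Agents are natural numbers.  A (deterministic, full-information) agent strategy sigma maps
   the initial placement p0 and the list of edge sets removed by the adversary in rounds
   0..t (including the current round t) to the node each agent i wants to be at after round t.
   Since everything else (positions, informed agents) is determined by these data, this is the
   most general deterministic strategy.  A requested move that is neither staying nor
   traversing a present edge is treated as staying. *)
primrec run_pos :: "'v set set \<Rightarrow> (nat \<Rightarrow> 'v) \<Rightarrow> ((nat \<Rightarrow> 'v) \<Rightarrow> 'v set set list \<Rightarrow> nat \<Rightarrow> 'v)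
    \<Rightarrow> (nat \<Rightarrow> 'v set set) \<Rightarrow> nat \<Rightarrow> nat \<Rightarrow> 'v" where
  "run_pos E p0 \<sigma> R 0 = p0"
| "run_pos E p0 \<sigma> R (Suc t) =
     (\<lambda>i. let p = run_pos E p0 \<sigma> R t i; q = \<sigma> p0 (map R [0..<Suc t]) i
          in if q = p \<or> {p, q} \<in> E - R t then q else p)"

primrec informed :: "nat set \<Rightarrow> nat set \<Rightarrow> (nat \<Rightarrow> nat \<Rightarrow> 'v) \<Rightarrow> nat \<Rightarrow> nat set" where
  "informed A S0 pos 0 = S0"
| "informed A S0 pos (Suc t) =
     informed A S0 pos t \<union> {i\<in>A. \<exists>j\<in>informed A S0 pos t. pos (Suc t) i = pos (Suc t) j}"

end

theory Submission
  imports Defs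
begin

lemma run_pos_cong:
  "(\<forall>s<t. R s = R' s) \<Longrightarrow> run_pos E p0 \<sigma> R t = run_pos E p0 \<sigma> R' t"
proof (induction t)
  case 0 then show ?case by simp
next
  case (Suc t)
  have m: "map R [0..<Suc t] = map R' [0..<Suc t]"
    using Suc.prems by (intro map_cong) auto
  have "R t = R' t" using Suc.prems by simp
  moreover have "run_pos E p0 \<sigma> R t = run_pos E p0 \<sigma> R' t" using Suc by simp
  ultimately show ?case by (simp only: run_pos.simps m)
qed

primrec advRs :: "((nat \<Rightarrow> 'v) \<Rightarrow> 'v set set) \<Rightarrow> 'v set set \<Rightarrow> (nat \<Rightarrow> 'v)
   \<Rightarrow> ((nat \<Rightarrow> 'v) \<Rightarrow> 'v set set list \<Rightarrow> nat \<Rightarrow> 'v) \<Rightarrow> nat \<Rightarrow> 'v set set list" where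
  "advRs ch E p0 \<sigma> 0 = []"
| "advRs ch E p0 \<sigma> (Suc t) = advRs ch E p0 \<sigma> t @ [ch (run_pos E p0 \<sigma> (\<lambda>s. advRs ch E p0 \<sigma> t ! s) t)]"

lemma advRs_len: "length (advRs ch E p0 \<sigma> t) = t"
  by (induction t) auto

lemma advRs_nth: "s < t \<Longrightarrow> advRs ch E p0 \<sigma> t ! s = advRs ch E p0 \<sigma> (Suc s) ! s"
proof (induction t)
  case 0 then show ?case by simp
next
  case (Suc t)
  show ?case
  proof (cases "s < t")
    case True
    then show ?thesis using Suc by (simp add: nth_append advRs_len)
  next
    case False
    then have "s = t" using Suc.prems by simp
    then show ?thesis by simp
  qed
qed

lemma advRs_fix:
  assumes R_def: "R = (\<lambda>s. advRs ch E p0 \<sigma> (Suc s) ! s)"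
  shows "R t = ch (run_pos E p0 \<sigma> R t)"
proof -
  have "R t = ch (run_pos E p0 \<sigma> (\<lambda>s. advRs ch E p0 \<sigma> t ! s) t)"
    unfolding R_def by (simp add: nth_append advRs_len)
  also have "run_pos E p0 \<sigma> (\<lambda>s. advRs ch E p0 \<sigma> t ! s) t = run_pos E p0 \<sigma> R t"
    by (rule run_pos_cong) (simp add: R_def advRs_nth)
  finally show ?thesis .
qed

lemma path_ins:
  assumes "(u, v) \<in> (edge_rel (F \<union> {{a, b}}))\<^sup>*"
  shows "(u, v) \<in> (edge_rel F)\<^sup>* \<or> (u, a) \<in> (edge_rel F)\<^sup>* \<or> (u, b) \<in> (edge_rel F)\<^sup>*"
  using assms
proof (induction rule: rtrancl_induct)
  case base then show ?case by simp
next
  case (step y z)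
  then have "{y, z} \<in> F \<or> {y, z} = {a, b}" by (auto simp: edge_rel_def)
  then show ?case
  proof
    assume "{y, z} \<in> F"
    then have "(y, z) \<in> edge_rel F" by (simp add: edge_rel_def)
    then show ?thesis using step.IH by (meson rtrancl.rtrancl_into_rtrancl)
  next
    assume "{y, z} = {a, b}"
    then have "y = a \<or> y = b" by (auto simp: doubleton_eq_iff)
    then show ?thesis using step.IH by (metis rtrancl.rtrancl_into_rtrancl rtrancl.rtrancl_refl
        \<open>{y, z} = {a, b}\<close> doubleton_eq_iff)
  qed
qed

lemma path_ins2:
  assumes "(u, v) \<in> (edge_rel (F \<union> {{a, b}}))\<^sup>*"
    and "(u, a) \<in> (edge_rel F)\<^sup>*" and "(u, b) \<in> (edge_rel F)\<^sup>*"
  shows "(u, v) \<in> (edge_rel F)\<^sup>*"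
  using assms(1)
proof (induction rule: rtrancl_induct)
  case base then show ?case by simp
next
  case (step y z)
  then have "{y, z} \<in> F \<or> {y, z} = {a, b}" by (auto simp: edge_rel_def)
  then show ?case
  proof
    assume "{y, z} \<in> F"
    then have "(y, z) \<in> edge_rel F" by (simp add: edge_rel_def)
    then show ?thesis using step.IH by (meson rtrancl.rtrancl_into_rtrancl)
  next
    assume "{y, z} = {a, b}"
    then have "z = a \<or> z = b" by (auto simp: doubleton_eq_iff)
    then show ?thesis using assms by auto
  qed
qed


theorem theorem7:
  fixes V :: "'v set" and E B :: "'v set set" and k1 k2 :: nat
  assumes "graph V E" and "conn V E" and "matching_bond V E B"
    and "k1 \<ge> 1" and "k2 \<ge> 1" and "k1 + k2 \<le> card B - 1"
  shows "\<forall>\<sigma> :: (nat \<Rightarrow> 'v) \<Rightarrow> 'v set set list \<Rightarrow> nat \<Rightarrow> 'v.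
           \<exists>p0 R. inj_on p0 {..<k1 + k2} \<and> p0 ` {..<k1 + k2} \<subseteq> V
             \<and> (\<forall>t. conn V (E - R t))
             \<and> (\<forall>t. informed {..<k1 + k2} {k1..<k1 + k2} (run_pos E p0 \<sigma> R) t = {k1..<k1 + k2})"
proof
  fix \<sigma> :: "(nat \<Rightarrow> 'v) \<Rightarrow> 'v set set list \<Rightarrow> nat \<Rightarrow> 'v"
  define n where "n = k1 + k2"
  have BE: "B \<subseteq> E" and nc: "\<not> conn V (E - B)" and bmin: "\<forall>e\<in>B. conn V (E - (B - {e}))"
    and disj: "\<forall>e1\<in>B. \<forall>e2\<in>B. e1 \<noteq> e2 \<longrightarrow> e1 \<inter> e2 = {}"
    using assms(3) unfolding matching_bond_def bond_def by auto
  have finV: "finite V" and Esub: "\<forall>e\<in>E. e \<subseteq> V \<and> card e = 2"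
    using assms(1) unfolding graph_def by auto
  have finE: "finite E"
    by (rule finite_subset[of E "Pow V"]) (use Esub finV in auto)
  have finB: "finite B" using finE BE finite_subset by blast
  have nB: "n < card B" using assms(4-6) unfolding n_def by linarith
  let ?F = "E - B"
  obtain u0 w0 where u0: "u0 \<in> V" and w0: "w0 \<in> V" and nuw: "(u0, w0) \<notin> (edge_rel ?F)\<^sup>*"
    using nc unfolding conn_def by blast
  define X where "X = {v. (u0, v) \<in> (edge_rel ?F)\<^sup>*}"
  have split: "\<exists>a b. e = {a, b} \<and> a \<in> X \<and> b \<notin> X" if eB: "e \<in> B" for e
  proof -
    obtain a b where ab: "e = {a, b}" "a \<noteq> b" using Esub eB BE by (meson card_2_iff subsetD)
    have eq: "E - (B - {e}) = ?F \<union> {{a, b}}" using eB BE ab by auto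
    have p: "(u0, w0) \<in> (edge_rel (?F \<union> {{a, b}}))\<^sup>*"
      using bmin eB u0 w0 unfolding conn_def by (metis eq)
    from path_ins[OF p] nuw have "a \<in> X \<or> b \<in> X" unfolding X_def by auto
    moreover from path_ins2[OF p] nuw have "\<not> (a \<in> X \<and> b \<in> X)" unfolding X_def by auto
    ultimately show ?thesis using ab by (metis insert_commute)
  qed
  obtain f where f: "bij_betw f {..<card B} B"
    using ex_bij_betw_nat_finite[OF finB] lessThan_atLeast0 by auto
  define x where "x j = (SOME v. v \<in> f j \<and> v \<in> X)" for j
  define y where "y j = (SOME v. v \<in> f j \<and> v \<notin> X)" for j
  have fB: "f j \<in> B" if "j < card B" for j using f that bij_betwE by blast
  have xy: "x j \<in> f j \<and> x j \<in> X \<and> y j \<in> f j \<and> y j \<notin> X" if jB: "j < card B" for j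
  proof -
    obtain a b where "f j = {a, b}" "a \<in> X" "b \<notin> X" using split[OF fB[OF jB]] by blast
    then have "\<exists>v. v \<in> f j \<and> v \<in> X" "\<exists>v. v \<in> f j \<and> v \<notin> X" by auto
    then show ?thesis unfolding x_def y_def by (metis (mono_tags, lifting) someI_ex)
  qed
  have finj: "f i = f j \<Longrightarrow> i < card B \<Longrightarrow> j < card B \<Longrightarrow> i = j" for i j
    using f unfolding bij_betw_def inj_on_def by auto
  have dj: "v \<in> f i \<Longrightarrow> v \<in> f j \<Longrightarrow> i < card B \<Longrightarrow> j < card B \<Longrightarrow> i = j" for v i j
  proof -
    assume a: "v \<in> f i" "v \<in> f j" "i < card B" "j < card B"
    have "f i = f j"
    proof (rule ccontr)
      assume "f i \<noteq> f j"
      then have "f i \<inter> f j = {}" using disj fB[OF a(3)] fB[OF a(4)] by blast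
      then show False using a(1,2) by blast
    qed
    then show "i = j" using finj a(3,4) by blast
  qed
  define p0 where "p0 i = (if i < k1 then x i else y i)" for i
  have inj: "inj_on p0 {..<n}"
  proof (rule inj_onI)
    fix i j assume i: "i \<in> {..<n}" and j: "j \<in> {..<n}" and eq: "p0 i = p0 j"
    have ib: "i < card B" and jb: "j < card B" using i j nB by auto
    show "i = j"
    proof (cases "i < k1"; cases "j < k1")
      assume "i < k1" "j < k1"
      then have "x i = x j" using eq unfolding p0_def by simp
      then show ?thesis using xy[OF ib] xy[OF jb] dj[of "x i" i j] ib jb by simp
    next
      assume "i < k1" "\<not> j < k1"
      then have "x i = y j" using eq unfolding p0_def by simp
      then show ?thesis using xy[OF ib] xy[OF jb] by simp
    next
      assume "\<not> i < k1" "j < k1"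
      then have "y i = x j" using eq unfolding p0_def by simp
      then show ?thesis using xy[OF ib] xy[OF jb] by simp
    next
      assume "\<not> i < k1" "\<not> j < k1"
      then have "y i = y j" using eq unfolding p0_def by simp
      then show ?thesis using xy[OF ib] xy[OF jb] dj[of "y i" i j] ib jb by simp
    qed
  qed
  have p0V: "p0 ` {..<n} \<subseteq> V"
  proof
    fix v assume "v \<in> p0 ` {..<n}"
    then obtain i where i: "i < n" "v = p0 i" by auto
    then have ib: "i < card B" using nB by auto
    have "f i \<subseteq> V" using fB[OF ib] BE Esub by auto
    then show "v \<in> V" using xy[OF ib] i unfolding p0_def by (auto split: if_splits)
  qed
  define ch where "ch p = B - {SOME e. e \<in> B \<and> (\<forall>i<n. p i \<notin> e)}" for p :: "nat \<Rightarrow> 'v"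
  have chex: "\<exists>e. e \<in> B \<and> (\<forall>i<n. p i \<notin> e)" for p :: "nat \<Rightarrow> 'v"
  proof -
    have "card {e\<in>B. \<exists>i<n. p i \<in> e} = card (\<Union>i\<in>{..<n}. {e\<in>B. p i \<in> e})"
      by (rule arg_cong[where f=card]) auto
    also have "\<dots> \<le> (\<Sum>i\<in>{..<n}. card {e\<in>B. p i \<in> e})" by (rule card_UN_le) simp
    also have "\<dots> \<le> (\<Sum>i\<in>{..<n}. 1)"
    proof (rule sum_mono)
      fix i
      have "finite {e\<in>B. p i \<in> e}" using finB by simp
      moreover have "\<forall>a\<in>{e\<in>B. p i \<in> e}. \<forall>b\<in>{e\<in>B. p i \<in> e}. a = b" using disj by blast
      ultimately show "card {e\<in>B. p i \<in> e} \<le> 1" by (simp only: One_nat_def card_le_Suc0_iff_eq)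
    qed
    also have "\<dots> = n" by simp
    finally have "card {e\<in>B. \<exists>i<n. p i \<in> e} < card B" using nB by linarith
    then have "\<not> B \<subseteq> {e\<in>B. \<exists>i<n. p i \<in> e}"
    proof (intro notI)
      assume "card {e\<in>B. \<exists>i<n. p i \<in> e} < card B" "B \<subseteq> {e\<in>B. \<exists>i<n. p i \<in> e}"
      moreover have "finite {e\<in>B. \<exists>i<n. p i \<in> e}" using finB by simp
      ultimately have "card B \<le> card {e\<in>B. \<exists>i<n. p i \<in> e}" using card_mono by blast
      then show False using \<open>card {e\<in>B. \<exists>i<n. p i \<in> e} < card B\<close> by linarith
    qed
    then show ?thesis by blast
  qed
  have chP: "\<exists>e. ch p = B - {e} \<and> e \<in> B \<and> (\<forall>i<n. p i \<notin> e)" for p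
    unfolding ch_def using someI_ex[OF chex[of p]] by blast
  define R where "R = (\<lambda>s. advRs ch E p0 \<sigma> (Suc s) ! s)"
  have Rt: "R t = ch (run_pos E p0 \<sigma> R t)" for t
    by (rule advRs_fix[OF R_def])
  have connR: "conn V (E - R t)" for t
    using chP[of "run_pos E p0 \<sigma> R t"] Rt[of t] bmin by auto
  define pos where "pos = run_pos E p0 \<sigma> R"
  have inv: "(\<forall>i<k1. pos t i \<in> X) \<and> (\<forall>i. k1 \<le> i \<and> i < n \<longrightarrow> pos t i \<notin> X)" for t
  proof (induction t)
    case 0
    show ?case unfolding pos_def using xy nB unfolding p0_def n_def by auto
  next
    case (Suc t)
    obtain e where e: "R t = B - {e}" "e \<in> B" "\<forall>i<n. pos t i \<notin> e"
      using chP[of "pos t"] Rt[of t] unfolding pos_def by auto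
    have step: "(pos (Suc t) i \<in> X) = (pos t i \<in> X)" if "i < n" for i
    proof -
      define p where "p = pos t i"
      define q where "q = \<sigma> p0 (map R [0..<Suc t]) i"
      have ps: "pos (Suc t) i = (if q = p \<or> {p, q} \<in> E - R t then q else p)"
        unfolding pos_def p_def q_def by (simp add: Let_def pos_def)
      have pe: "p \<notin> e" using e that unfolding p_def by auto
      show ?thesis
      proof (cases "q \<noteq> p \<and> {p, q} \<in> E - R t")
        case True
        then have "{p, q} \<in> ?F" using e pe by auto
        then have r1: "(p, q) \<in> edge_rel ?F" and r2: "(q, p) \<in> edge_rel ?F"
          by (auto simp: edge_rel_def insert_commute)
        have "(q \<in> X) = (p \<in> X)"
          unfolding X_def using r1 r2 rtrancl.rtrancl_into_rtrancl by (metis mem_Collect_eq)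
        then show ?thesis using ps True unfolding p_def by auto
      next
        case False
        then show ?thesis using ps unfolding p_def by auto
      qed
    qed
    show ?case using Suc step unfolding n_def by auto
  qed
  have inf: "informed {..<n} {k1..<n} pos t = {k1..<n}" for t
  proof (induction t)
    case 0 show ?case by simp
  next
    case (Suc t)
    have "{i\<in>{..<n}. \<exists>j\<in>{k1..<n}. pos (Suc t) i = pos (Suc t) j} \<subseteq> {k1..<n}"
    proof
      fix i assume "i \<in> {i\<in>{..<n}. \<exists>j\<in>{k1..<n}. pos (Suc t) i = pos (Suc t) j}"
      then obtain j where "i < n" "j \<in> {k1..<n}" "pos (Suc t) i = pos (Suc t) j" by auto
      then show "i \<in> {k1..<n}" using inv[of "Suc t"] by (metis atLeastLessThan_iff not_le)
    qed
    then show ?case using Suc by auto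
  qed
  show "\<exists>p0 R. inj_on p0 {..<k1 + k2} \<and> p0 ` {..<k1 + k2} \<subseteq> V
             \<and> (\<forall>t. conn V (E - R t))
             \<and> (\<forall>t. informed {..<k1 + k2} {k1..<k1 + k2} (run_pos E p0 \<sigma> R) t = {k1..<k1 + k2})"
    using inj p0V connR inf unfolding n_def pos_def by blast
qed

end
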